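(* Suppose that each of the equations $\partial_{\overline z}W=aW+b\overline W$ and $\partial_{\overline z}V=-aV-\overline b\,\overline V$ possesses a Cauchy kernel in $\mathbb C_j$ behaving like $\mathcal O(|z|^{-1})$ as $z\to\infty$. Then such Cauchy kernels are unique (for each of the two equations there is only one Cauchy kernel in $\mathbb C_j$ behaving like $\mathcal O(|z|^{-1})$ as $z\to\infty$).
   Context: Bicomplex numbers: $i,j$ imaginary units, $i^2=j^2=-1$, $ij=ji$; $\mathbb C_i=\{a+ib\}$, $\mathbb C_j=\{a+jb\}$ ($a,b$ real); $\mathbb B=\{u+jv:u,v\in\mathbb C_i\}$, $\overline{u+jv}=u-jv$. Plane $=\mathbb C_j$, $z=x+jy$, $\partial_{\overline z}=\frac12(\partial_x+j\partial_y)$. Norm: with $W^\pm=\operatorname{Sc}W\mp i\operatorname{Vec}W$, $|W|=\frac12(|W^+|+|W^-|)$; $\mathcal O(|z|^{-1})$ means $|z||Z(z)|$ bounded for large $|z|$. Setting: $a,b$ are $\mathbb B$-valued Hölder continuous functions on $\mathbb C_j$; solutions are $\mathbb B$-valued functions with continuous first partials satisfying the equation. A Cauchy kernel in $\mathbb C_j$ is a family $Z^{(-1)}(1,z_0,z)$, $Z^{(-1)}(j,z_0,z)$, $z_0\in\mathbb C_j$, both solutions in $z\ne z_0$, with $\lim_{z\to z_0}(z-z_0)Z^{(-1)}(\alpha,z_0,z)=\alpha$, $\alpha=1,j$. *)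

theory Defs
  imports "HOL-Analysis.Analysis"
begin

text \<open>Bicomplex numbers \<open>u + j v\<close> (\<open>u, v \<in> C_i\<close>) are represented as pairs \<open>(u, v) :: complex \<times> complex\<close>;
  the first HOL complex type plays the role of \<open>C_i\<close>.
  The plane \<open>C_j\<close>, \<open>z = x + j y\<close>, is represented by the HOL type complex, \<open>z = Complex x y\<close>.\<close>

type_synonym bicomplex = "complex \<times> complex"

definition bmult :: "bicomplex \<Rightarrow> bicomplex \<Rightarrow> bicomplex" where
  "bmult W V = (fst W * fst V - snd W * snd V, fst W * snd V + snd W * fst V)"

definition bj :: bicomplex where
  "bj = (0, 1)"

definition bone :: bicomplex where
  "bone = (1, 0)"

definition bcnj :: "bicomplex \<Rightarrow> bicomplex" where
  "bcnj W = (fst W, - snd W)"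

definition bemb :: "complex \<Rightarrow> bicomplex" where
  "bemb z = (complex_of_real (Re z), complex_of_real (Im z))"

text \<open>The norm of the paper: \<open>W^\<pm> = Sc W \<mp> i Vec W\<close>, \<open>|W| = (|W^+| + |W^-|)/2\<close>.\<close>
definition bnorm :: "bicomplex \<Rightarrow> real" where
  "bnorm W = (cmod (fst W - \<i> * snd W) + cmod (fst W + \<i> * snd W)) / 2"

definition hoelder_continuous :: "(complex \<Rightarrow> bicomplex) \<Rightarrow> bool" where
  "hoelder_continuous f \<longleftrightarrow>
     (\<forall>r>0. \<exists>\<alpha> C. 0 < \<alpha> \<and> \<alpha> \<le> 1 \<and>
        (\<forall>z\<in>cball 0 r. \<forall>w\<in>cball 0 r. bnorm (f z - f w) \<le> C * cmod (z - w) powr \<alpha>))"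

definition has_cont_partials ::
  "(complex \<Rightarrow> bicomplex) \<Rightarrow> (complex \<Rightarrow> bicomplex) \<Rightarrow> (complex \<Rightarrow> bicomplex) \<Rightarrow> complex set \<Rightarrow> bool" where
  "has_cont_partials W Wx Wy S \<longleftrightarrow>
     (\<forall>z\<in>S. ((\<lambda>t::real. W (z + complex_of_real t)) has_vector_derivative Wx z) (at 0) \<and>
            ((\<lambda>t::real. W (z + \<i> * complex_of_real t)) has_vector_derivative Wy z) (at 0)) \<and>
     continuous_on S Wx \<and> continuous_on S Wy"

text \<open>\<open>W\<close> is a solution of \<open>\<partial>_{\<bar>z} W = a W + b \<bar>W\<close> on the open set \<open>S\<close>,
  where \<open>\<partial>_{\<bar>z} = (\<partial>_x + j \<partial>_y)/2\<close>.\<close>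
definition is_solution ::
  "(complex \<Rightarrow> bicomplex) \<Rightarrow> (complex \<Rightarrow> bicomplex) \<Rightarrow> (complex \<Rightarrow> bicomplex) \<Rightarrow> complex set \<Rightarrow> bool" where
  "is_solution a b W S \<longleftrightarrow>
     (\<exists>Wx Wy. has_cont_partials W Wx Wy S \<and>
        (\<forall>z\<in>S. (1/2::real) *\<^sub>R (Wx z + bmult bj (Wy z)) = bmult (a z) (W z) + bmult (b z) (bcnj (W z))))"

text \<open>A Cauchy kernel in \<open>C_j\<close>: \<open>Z1 z0 z = Z^{(-1)}(1,z0,z)\<close>, \<open>Zj z0 z = Z^{(-1)}(j,z0,z)\<close>.\<close>
definition cauchy_kernel ::
  "(complex \<Rightarrow> bicomplex) \<Rightarrow> (complex \<Rightarrow> bicomplex) \<Rightarrow>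
   (complex \<Rightarrow> complex \<Rightarrow> bicomplex) \<Rightarrow> (complex \<Rightarrow> complex \<Rightarrow> bicomplex) \<Rightarrow> bool" where
  "cauchy_kernel a b Z1 Zj \<longleftrightarrow>
     (\<forall>z0. is_solution a b (Z1 z0) (- {z0}) \<and> is_solution a b (Zj z0) (- {z0}) \<and>
        ((\<lambda>z. bmult (bemb (z - z0)) (Z1 z0 z)) \<longlongrightarrow> bone) (at z0) \<and>
        ((\<lambda>z. bmult (bemb (z - z0)) (Zj z0 z)) \<longlongrightarrow> bj) (at z0))"

definition big_O_inv :: "(complex \<Rightarrow> bicomplex) \<Rightarrow> bool" where
  "big_O_inv Z \<longleftrightarrow> (\<exists>R M. \<forall>z. R \<le> cmod z \<longrightarrow> cmod z * bnorm (Z z) \<le> M)"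

definition decaying_kernel ::
  "(complex \<Rightarrow> bicomplex) \<Rightarrow> (complex \<Rightarrow> bicomplex) \<Rightarrow>
   (complex \<Rightarrow> complex \<Rightarrow> bicomplex) \<Rightarrow> (complex \<Rightarrow> complex \<Rightarrow> bicomplex) \<Rightarrow> bool" where
  "decaying_kernel a b Z1 Zj \<longleftrightarrow>
     cauchy_kernel a b Z1 Zj \<and> (\<forall>z0. big_O_inv (Z1 z0) \<and> big_O_inv (Zj z0))"

end

theory Submission
  imports Defs
begin

section \<open>Bicomplex algebra\<close>

lemma bmult_comm: "bmult x y = bmult y x" by (simp add: bmult_def algebra_simps)
lemma bmult_assoc: "bmult (bmult x y) z = bmult x (bmult y z)"
  by (simp add: bmult_def algebra_simps)
lemma bmult_add_left: "bmult (x + y) z = bmult x z + bmult y z"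
  by (simp add: bmult_def algebra_simps)
lemma bmult_add_right: "bmult z (x + y) = bmult z x + bmult z y"
  by (simp add: bmult_def algebra_simps)
lemma bmult_diff_left: "bmult (x - y) z = bmult x z - bmult y z"
  by (simp add: bmult_def algebra_simps)
lemma bmult_diff_right: "bmult z (x - y) = bmult z x - bmult z y"
  by (simp add: bmult_def algebra_simps)
lemma bmult_minus_left: "bmult (- x) z = - bmult x z"
  by (simp add: bmult_def algebra_simps)
lemma bmult_scaleR_left: "bmult (r *\<^sub>R x) z = r *\<^sub>R bmult x z"
  by (simp add: bmult_def algebra_simps scaleR_conv_of_real)
lemma bmult_scaleR_right: "bmult z (r *\<^sub>R x) = r *\<^sub>R bmult z x"
  by (simp add: bmult_def algebra_simps scaleR_conv_of_real)
lemma bmult_zero_left[simp]: "bmult 0 z = 0" by (simp add: bmult_def zero_prod_def)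
lemma bmult_zero_right[simp]: "bmult z 0 = 0" by (simp add: bmult_def zero_prod_def)
lemma bmult_bone[simp]: "bmult bone z = z" by (simp add: bmult_def bone_def)
lemma bcnj_bmult: "bcnj (bmult x y) = bmult (bcnj x) (bcnj y)"
  by (simp add: bmult_def bcnj_def algebra_simps)
lemma bcnj_diff: "bcnj (x - y) = bcnj x - bcnj y"
  by (simp add: bcnj_def)
lemma bemb_mult: "bmult (bemb z) (bemb w) = bemb (z * w)"
  by (simp add: bmult_def bemb_def algebra_simps)
lemma bemb_one: "bemb 1 = bone" by (simp add: bemb_def bone_def)
lemma bemb_inv: "z \<noteq> 0 \<Longrightarrow> bmult (bemb (inverse z)) (bemb z) = bone"
  by (simp add: bemb_mult bemb_one)
lemma norm_bemb: "norm (bemb z) = norm z"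
  by (simp add: bemb_def norm_Pair cmod_def)

lemma norm_fst_le: "norm (fst x) \<le> norm (x::'a::real_normed_vector \<times> 'b::real_normed_vector)"
  by (metis norm_Pair norm_ge_zero real_sqrt_sum_squares_ge1 surjective_pairing)

lemma norm_snd_le: "norm (snd x) \<le> norm (x::'a::real_normed_vector \<times> 'b::real_normed_vector)"
  by (metis norm_Pair norm_ge_zero real_sqrt_sum_squares_ge2 surjective_pairing)

lemma norm_bmult: "norm (bmult x y) \<le> 4 * norm x * norm y"
proof -
  have a: "norm (fst x) \<le> norm x" "norm (snd x) \<le> norm x"
       "norm (fst y) \<le> norm y" "norm (snd y) \<le> norm y"
    using norm_fst_le norm_snd_le by blast+
  have "norm (bmult x y) \<le> norm (fst x * fst y - snd x * snd y) + norm (fst x * snd y + snd x * fst y)"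
    unfolding bmult_def by (rule norm_Pair_le)
  also have "\<dots> \<le> (norm (fst x) * norm (fst y) + norm (snd x) * norm (snd y))
      + (norm (fst x) * norm (snd y) + norm (snd x) * norm (fst y))"
    by (intro add_mono order.trans[OF norm_triangle_ineq4] order.trans[OF norm_triangle_ineq])
       (simp_all add: norm_mult)
  also have "\<dots> \<le> 4 * norm x * norm y"
  proof -
    have "norm (fst x) * norm (fst y) \<le> norm x * norm y"
      using a by (intro mult_mono) auto
    moreover have "norm (snd x) * norm (snd y) \<le> norm x * norm y"
      using a by (intro mult_mono) auto
    moreover have "norm (fst x) * norm (snd y) \<le> norm x * norm y"
      using a by (intro mult_mono) auto
    moreover have "norm (snd x) * norm (fst y) \<le> norm x * norm y"
      using a by (intro mult_mono) auto
    ultimately show ?thesis by linarith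
  qed
  finally show ?thesis .
qed

lemma bounded_bilinear_bmult: "bounded_bilinear bmult"
proof
  show "bmult (a + a') b = bmult a b + bmult a' b" for a a' b by (rule bmult_add_left)
  show "bmult a (b + b') = bmult a b + bmult a b'" for a b b' by (rule bmult_add_right)
  show "bmult (r *\<^sub>R a) b = r *\<^sub>R bmult a b" for r a b by (rule bmult_scaleR_left)
  show "bmult a (r *\<^sub>R b) = r *\<^sub>R bmult a b" for r a b by (rule bmult_scaleR_right)
  show "\<exists>K. \<forall>a b. norm (bmult a b) \<le> norm a * norm b * K"
    by (rule exI[of _ 4]) (metis norm_bmult mult.commute mult.assoc)
qed

lemma bnorm_ge: "norm W \<le> 2 * bnorm W"
proof -
  obtain u v where W: "W = (u, v)" by fastforce
  have "norm u \<le> bnorm W"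
  proof -
    have "2 * u = (u - \<i> * v) + (u + \<i> * v)" by simp
    hence "norm (2 * u) \<le> norm (u - \<i> * v) + norm (u + \<i> * v)"
      by (metis norm_triangle_ineq)
    hence "2 * norm u \<le> norm (u - \<i> * v) + norm (u + \<i> * v)"
      by (simp add: norm_mult)
    thus ?thesis by (simp add: bnorm_def W)
  qed
  moreover have "norm v \<le> bnorm W"
  proof -
    have "2 * \<i> * v = (u + \<i> * v) - (u - \<i> * v)" by simp
    hence "norm (2 * \<i> * v) \<le> norm (u - \<i> * v) + norm (u + \<i> * v)"
      by (metis norm_triangle_ineq4 add.commute)
    hence "2 * norm v \<le> norm (u - \<i> * v) + norm (u + \<i> * v)"
      by (simp add: norm_mult)
    thus ?thesis by (simp add: bnorm_def W)
  qed
  ultimately show ?thesis using norm_Pair_le[of u v] W by simp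
qed


section \<open>Partial derivatives\<close>

definition cpart :: "(complex \<Rightarrow> 'b::real_normed_vector) \<Rightarrow> (complex \<Rightarrow> 'b) \<Rightarrow> (complex \<Rightarrow> 'b) \<Rightarrow> complex set \<Rightarrow> bool" where
  "cpart W Wx Wy S \<longleftrightarrow>
     (\<forall>z\<in>S. ((\<lambda>t::real. W (z + complex_of_real t)) has_vector_derivative Wx z) (at 0) \<and>
            ((\<lambda>t::real. W (z + \<i> * complex_of_real t)) has_vector_derivative Wy z) (at 0)) \<and>
     continuous_on S Wx \<and> continuous_on S Wy"

lemma hcp_cpart: "has_cont_partials W Wx Wy S = cpart W Wx Wy S"
  by (simp add: has_cont_partials_def cpart_def)

lemma shift_deriv:
  assumes "(g has_vector_derivative v) (at 0)"
  shows "((\<lambda>y. g (y - y0)) has_vector_derivative v) (at y0)"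
proof -
  have "((\<lambda>y::real. y - y0) has_vector_derivative 1) (at y0)"
    by (auto intro!: derivative_eq_intros)
  from vector_diff_chain_at[OF this, of g v] assms show ?thesis by (simp add: o_def)
qed

lemma cpart_xline:
  assumes "cpart F Fx Fy S" "Complex x0 y \<in> S"
  shows "((\<lambda>x. F (Complex x y)) has_vector_derivative Fx (Complex x0 y)) (at x0)"
proof -
  have "((\<lambda>t::real. F (Complex x0 y + complex_of_real t)) has_vector_derivative Fx (Complex x0 y)) (at 0)"
    using assms unfolding cpart_def by blast
  from shift_deriv[OF this, of x0]
  have "((\<lambda>t. F (Complex x0 y + complex_of_real (t - x0))) has_vector_derivative Fx (Complex x0 y)) (at x0)"
    by (simp only:)
  moreover have "(\<lambda>t. F (Complex x0 y + complex_of_real (t - x0))) = (\<lambda>x. F (Complex x y))"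
    by (intro ext arg_cong[where f=F]) (simp add: complex_eq_iff)
  ultimately show ?thesis by simp
qed

lemma cpart_yline:
  assumes "cpart F Fx Fy S" "Complex x y0 \<in> S"
  shows "((\<lambda>y. F (Complex x y)) has_vector_derivative Fy (Complex x y0)) (at y0)"
proof -
  have "((\<lambda>t::real. F (Complex x y0 + \<i> * complex_of_real t)) has_vector_derivative Fy (Complex x y0)) (at 0)"
    using assms unfolding cpart_def by blast
  from shift_deriv[OF this, of y0]
  have "((\<lambda>t. F (Complex x y0 + \<i> * complex_of_real (t - y0))) has_vector_derivative Fy (Complex x y0)) (at y0)"
    by (simp only:)
  moreover have "(\<lambda>t. F (Complex x y0 + \<i> * complex_of_real (t - y0))) = (\<lambda>y. F (Complex x y))"
    by (intro ext arg_cong[where f=F]) (simp add: complex_eq_iff)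
  ultimately show ?thesis by simp
qed

lemma cpart_linear:
  assumes "bounded_linear f" "cpart F Fx Fy S"
  shows "cpart (\<lambda>z. f (F z)) (\<lambda>z. f (Fx z)) (\<lambda>z. f (Fy z)) S"
  using assms unfolding cpart_def
  by (auto intro: bounded_linear.has_vector_derivative continuous_on_compose2[OF linear_continuous_on]
      simp: bounded_linear.continuous_on)

lemma cpart_diff:
  assumes "cpart F Fx Fy S" "cpart G Gx Gy S"
  shows "cpart (\<lambda>z. F z - G z) (\<lambda>z. Fx z - Gx z) (\<lambda>z. Fy z - Gy z) S"
  using assms unfolding cpart_def
  by (auto intro!: has_vector_derivative_diff continuous_on_diff)

lemma cpart_subset: "cpart F Fx Fy S \<Longrightarrow> T \<subseteq> S \<Longrightarrow> cpart F Fx Fy T"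
  unfolding cpart_def by (auto intro: continuous_on_subset)

lemma mvt_bound:
  fixes g :: "real \<Rightarrow> 'b::banach"
  assumes "a \<le> b" "\<And>t. t \<in> {a..b} \<Longrightarrow> (g has_vector_derivative g' t) (at t)"
    "\<And>t. t \<in> {a..b} \<Longrightarrow> norm (g' t) \<le> K"
  shows "norm (g b - g a) \<le> K * (b - a)"
proof -
  have int: "(g' has_integral (g b - g a)) (cbox a b)"
    using assms by (simp, intro fundamental_theorem_of_calculus) (auto intro: has_vector_derivative_at_within)
  have "a \<in> {a..b}" using assms(1) by simp
  hence "norm (g' a) \<le> K" by (rule assms(3))
  hence k0: "0 \<le> K" by (rule order.trans[OF norm_ge_zero])
  have "\<And>x. x \<in> cbox a b \<Longrightarrow> norm (g' x) \<le> K" using assms(3) by simp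
  from has_integral_bound[OF k0 int this] show ?thesis using assms(1) by simp
qed

lemma cpart_continuous:
  fixes F :: "complex \<Rightarrow> 'b::banach"
  assumes "cpart F Fx Fy S" "open S"
  shows "continuous_on S F"
proof (rule continuous_at_imp_continuous_on, rule ballI)
  fix z0 assume z0: "z0 \<in> S"
  obtain e where e: "e > 0" "cball z0 e \<subseteq> S" using assms(2) z0 open_contains_cball by blast
  have "continuous_on (cball z0 e) Fx"
    using assms(1) e unfolding cpart_def by (meson continuous_on_subset)
  hence "compact (Fx ` cball z0 e)" by (intro compact_continuous_image) auto
  hence "bounded (Fx ` cball z0 e)" by (rule compact_imp_bounded)
  then obtain K where K0: "K > 0" "\<forall>w\<in>Fx ` cball z0 e. norm w \<le> K" unfolding bounded_pos by blast
  have K: "K > 0" "\<And>z. z \<in> cball z0 e \<Longrightarrow> norm (Fx z) \<le> K" using K0 by auto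
  define x0 y0 where "x0 = Re z0" "y0 = Im z0"
  have z0eq: "z0 = Complex x0 y0" by (simp add: x0_y0_def complex_eq_iff)
  have "((\<lambda>y. F (Complex x0 y)) has_vector_derivative Fy (Complex x0 y0)) (at y0)"
    using cpart_yline[OF assms(1)] z0 z0eq by simp
  hence hc: "isCont (\<lambda>y. F (Complex x0 y)) y0"
    using has_vector_derivative_continuous by blast
  show "isCont F z0"
    unfolding isCont_def
  proof (rule metric_LIM_I)
    fix r :: real assume r: "r > 0"
    obtain d1 where d1: "d1 > 0" "\<And>y. y \<noteq> y0 \<and> dist y y0 < d1 \<Longrightarrow> dist (F (Complex x0 y)) (F (Complex x0 y0)) < r/2"
      using metric_LIM_D[OF hc[unfolded isCont_def] half_gt_zero[OF r]] by blast
    define d where "d = min e (min d1 (r / (2 * K)))"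
    have "d > 0" using e d1 r K by (simp add: d_def)
    moreover have "dist (F z) (F z0) < r" if z: "dist z z0 < d" for z
    proof -
      define x y where "x = Re z" "y = Im z"
      have zeq: "z = Complex x y" by (simp add: x_y_def complex_eq_iff)
      have dz: "cmod (z - z0) < d" using z by (simp add: dist_norm)
      have hx: "\<bar>x - x0\<bar> \<le> cmod (z - z0)" "\<bar>y - y0\<bar> \<le> cmod (z - z0)"
        using abs_Re_le_cmod[of "z - z0"] abs_Im_le_cmod[of "z - z0"] by (auto simp: x_y_def x0_y0_def)
      have inball: "Complex t y \<in> cball z0 e" if "\<bar>t - x0\<bar> \<le> \<bar>x - x0\<bar>" for t
      proof -
        have "cmod (Complex t y - z0) = sqrt ((t - x0)^2 + (y - y0)^2)"
          by (simp add: cmod_def x0_y0_def)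
        also have "\<dots> \<le> sqrt ((x - x0)^2 + (y - y0)^2)"
          using that by (intro real_sqrt_le_mono add_mono) (auto simp: abs_le_square_iff)
        also have "\<dots> = cmod (z - z0)" by (simp add: cmod_def x_y_def x0_y0_def)
        finally show ?thesis using dz by (simp add: dist_norm norm_minus_commute d_def)
      qed
      have deriv: "((\<lambda>t. F (Complex t y)) has_vector_derivative Fx (Complex t y)) (at t)"
        if "\<bar>t - x0\<bar> \<le> \<bar>x - x0\<bar>" for t
        using cpart_xline[OF assms(1)] inball[OF that] e by blast
      have bnd: "norm (Fx (Complex t y)) \<le> K" if "\<bar>t - x0\<bar> \<le> \<bar>x - x0\<bar>" for t
        using K inball[OF that] by blast
      have m1: "norm (F (Complex x y) - F (Complex x0 y)) \<le> K * \<bar>x - x0\<bar>"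
      proof (cases "x0 \<le> x")
        case True
        have "norm (F (Complex x y) - F (Complex x0 y)) \<le> K * (x - x0)"
          using True by (intro mvt_bound[of x0 x]) (auto intro!: deriv bnd)
        thus ?thesis using True by simp
      next
        case False
        have "norm (F (Complex x0 y) - F (Complex x y)) \<le> K * (x0 - x)"
          using False by (intro mvt_bound[of x x0]) (auto intro!: deriv bnd)
        thus ?thesis using False by (simp add: norm_minus_commute)
      qed
      have "K * \<bar>x - x0\<bar> < K * (r / (2 * K))"
        using hx dz K by (intro mult_strict_left_mono) (auto simp: d_def)
      hence m1': "norm (F (Complex x y) - F (Complex x0 y)) < r/2" using m1 K by simp
      have m2: "dist (F (Complex x0 y)) (F (Complex x0 y0)) < r/2"
      proof (cases "y = y0")
        case True thus ?thesis using r by simp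
      next
        case False
        have "dist y y0 < d1" using hx dz unfolding d_def dist_real_def by linarith
        thus ?thesis using d1(2) False by blast
      qed
      have "F z - F z0 = (F (Complex x y) - F (Complex x0 y)) + (F (Complex x0 y) - F (Complex x0 y0))"
        using zeq z0eq by simp
      hence "dist (F z) (F z0) \<le> norm (F (Complex x y) - F (Complex x0 y)) + dist (F (Complex x0 y)) (F (Complex x0 y0))"
        by (metis dist_norm norm_triangle_ineq)
      thus ?thesis using m1' m2 by linarith
    qed
    ultimately show "\<exists>s>0. \<forall>x. x \<noteq> z0 \<and> dist x z0 < s \<longrightarrow> dist (F x) (F z0) < r" by blast
  qed
qed


section \<open>Boundary integrals over rectangles\<close>

definition hint :: "(complex \<Rightarrow> 'b::banach) \<Rightarrow> real \<Rightarrow> real \<Rightarrow> real \<Rightarrow> 'b" where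
  "hint P c a b = integral {a..b} (\<lambda>x. P (Complex x c))"
definition vint :: "(complex \<Rightarrow> 'b::banach) \<Rightarrow> real \<Rightarrow> real \<Rightarrow> real \<Rightarrow> 'b" where
  "vint Q c a b = integral {a..b} (\<lambda>y. Q (Complex c y))"
definition bdry :: "(complex \<Rightarrow> 'b::banach) \<Rightarrow> (complex \<Rightarrow> 'b) \<Rightarrow> real \<Rightarrow> real \<Rightarrow> real \<Rightarrow> real \<Rightarrow> 'b" where
  "bdry P Q a b c d = hint P c a b + vint Q b c d - hint P d a b - vint Q a c d"
definition rect :: "real \<Rightarrow> real \<Rightarrow> real \<Rightarrow> real \<Rightarrow> complex set" where
  "rect a b c d = {z. a \<le> Re z \<and> Re z \<le> b \<and> c \<le> Im z \<and> Im z \<le> d}"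

definition cform :: "(complex \<Rightarrow> 'b::banach) \<Rightarrow> (complex \<Rightarrow> 'b) \<Rightarrow> complex set \<Rightarrow> bool" where
  "cform P Q U \<longleftrightarrow> (\<exists>Px Py Qx Qy. cpart P Px Py U \<and> cpart Q Qx Qy U \<and> (\<forall>z\<in>U. Py z = Qx z))"

lemma cform_subset: "cform P Q U \<Longrightarrow> V \<subseteq> U \<Longrightarrow> cform P Q V"
  unfolding cform_def by (meson cpart_subset subsetD)

lemma in_rect: "Complex x y \<in> rect a b c d \<longleftrightarrow> a \<le> x \<and> x \<le> b \<and> c \<le> y \<and> y \<le> d"
  by (simp add: rect_def)

lemma hline_integrable:
  fixes P :: "complex \<Rightarrow> 'b::banach"
  assumes "cpart P Px Py U" "\<And>x. x \<in> {a..b} \<Longrightarrow> Complex x c \<in> U"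
  shows "(\<lambda>x. P (Complex x c)) integrable_on {a..b}"
proof -
  have "continuous_on {a..b} (\<lambda>x. P (Complex x c))"
    by (rule continuous_at_imp_continuous_on, rule ballI, rule has_vector_derivative_continuous,
        rule cpart_xline[OF assms(1) assms(2)])
  thus ?thesis by (rule integrable_continuous_real)
qed

lemma vline_integrable:
  fixes P :: "complex \<Rightarrow> 'b::banach"
  assumes "cpart P Px Py U" "\<And>y. y \<in> {a..b} \<Longrightarrow> Complex c y \<in> U"
  shows "(\<lambda>y. P (Complex c y)) integrable_on {a..b}"
proof -
  have "continuous_on {a..b} (\<lambda>y. P (Complex c y))"
    by (rule continuous_at_imp_continuous_on, rule ballI, rule has_vector_derivative_continuous,
        rule cpart_yline[OF assms(1) assms(2)])
  thus ?thesis by (rule integrable_continuous_real)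
qed

lemma bdry_split_x:
  fixes P :: "complex \<Rightarrow> 'b::banach"
  assumes "cform P Q U" "\<And>x. x \<in> {a..b} \<Longrightarrow> Complex x c \<in> U \<and> Complex x d \<in> U" "a \<le> m" "m \<le> b"
  shows "bdry P Q a b c d = bdry P Q a m c d + bdry P Q m b c d"
proof -
  obtain Px Py where P: "cpart P Px Py U" using assms(1) unfolding cform_def by blast
  have h1: "hint P c a m + hint P c m b = hint P c a b"
    unfolding hint_def using assms
    by (intro Henstock_Kurzweil_Integration.integral_combine hline_integrable[OF P]) auto
  have h2: "hint P d a m + hint P d m b = hint P d a b"
    unfolding hint_def using assms
    by (intro Henstock_Kurzweil_Integration.integral_combine hline_integrable[OF P]) auto
  show ?thesis unfolding bdry_def h1[symmetric] h2[symmetric] by (simp add: algebra_simps)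
qed

lemma bdry_split_y:
  fixes P :: "complex \<Rightarrow> 'b::banach"
  assumes "cform P Q U" "\<And>y. y \<in> {c..d} \<Longrightarrow> Complex a y \<in> U \<and> Complex b y \<in> U" "c \<le> m" "m \<le> d"
  shows "bdry P Q a b c d = bdry P Q a b c m + bdry P Q a b m d"
proof -
  obtain Qx Qy where Q: "cpart Q Qx Qy U" using assms(1) unfolding cform_def by blast
  have h1: "vint Q a c m + vint Q a m d = vint Q a c d"
    unfolding vint_def using assms
    by (intro Henstock_Kurzweil_Integration.integral_combine vline_integrable[OF Q]) auto
  have h2: "vint Q b c m + vint Q b m d = vint Q b c d"
    unfolding vint_def using assms
    by (intro Henstock_Kurzweil_Integration.integral_combine vline_integrable[OF Q]) auto
  show ?thesis unfolding bdry_def h1[symmetric] h2[symmetric] by (simp add: algebra_simps)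
qed

lemma continuous_on_Complex_pair:
  assumes "continuous_on U F" "\<And>x y. x \<in> {a..b} \<Longrightarrow> y \<in> {c..d} \<Longrightarrow> Complex x y \<in> U"
  shows "continuous_on (cbox (a, c) (b, d)) (\<lambda>(x, y). F (Complex x y))"
proof -
  have "continuous_on (cbox (a, c) (b, d)) (\<lambda>p::real\<times>real. Complex (fst p) (snd p))"
    unfolding Complex_eq by (intro continuous_intros)
  moreover have "(\<lambda>p::real\<times>real. Complex (fst p) (snd p)) ` cbox (a, c) (b, d) \<subseteq> U"
    using assms(2) by (auto simp: cbox_Pair_eq)
  ultimately have "continuous_on (cbox (a, c) (b, d)) (F \<circ> (\<lambda>p::real\<times>real. Complex (fst p) (snd p)))"
    by (intro continuous_on_compose continuous_on_subset[OF assms(1)])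
  thus ?thesis by (simp add: o_def split_beta)
qed

lemma green_rect:
  fixes P :: "complex \<Rightarrow> 'b::banach"
  assumes "cform P Q U" "rect a b c d \<subseteq> U" "a \<le> b" "c \<le> d"
  shows "bdry P Q a b c d = 0"
proof -
  obtain Px Py Qx Qy where P: "cpart P Px Py U" and Q: "cpart Q Qx Qy U" and eq: "\<And>z. z \<in> U \<Longrightarrow> Py z = Qx z"
    using assms(1) unfolding cform_def by blast
  have inU: "Complex x y \<in> U" if "x \<in> {a..b}" "y \<in> {c..d}" for x y
  proof -
    have "Complex x y \<in> rect a b c d" using that by (simp add: in_rect)
    thus ?thesis using assms(2) by blast
  qed
  have ftcP: "((\<lambda>y. Py (Complex x y)) has_integral (P (Complex x d) - P (Complex x c))) {c..d}"
    if x: "x \<in> {a..b}" for x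
  proof -
    have "((\<lambda>y. P (Complex x y)) has_vector_derivative Py (Complex x y)) (at y within {c..d})"
      if "y \<in> {c..d}" for y
      using cpart_yline[OF P inU[OF x that]] by (rule has_vector_derivative_at_within)
    from fundamental_theorem_of_calculus[OF assms(4), of "\<lambda>y. P (Complex x y)", OF this] show ?thesis by simp
  qed
  have ftcQ: "((\<lambda>x. Qx (Complex x y)) has_integral (Q (Complex b y) - Q (Complex a y))) {a..b}"
    if y: "y \<in> {c..d}" for y
  proof -
    have "((\<lambda>x. Q (Complex x y)) has_vector_derivative Qx (Complex x y)) (at x within {a..b})"
      if "x \<in> {a..b}" for x
      using cpart_xline[OF Q inU[OF that y]] by (rule has_vector_derivative_at_within)
    from fundamental_theorem_of_calculus[OF assms(3), of "\<lambda>x. Q (Complex x y)", OF this] show ?thesis by simp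
  qed
  have iP: "(\<lambda>x. P (Complex x e)) integrable_on {a..b}" if "e \<in> {c..d}" for e
    by (rule hline_integrable[OF P]) (rule inU[OF _ that])
  have iQ: "(\<lambda>y. Q (Complex e y)) integrable_on {c..d}" if "e \<in> {a..b}" for e
    by (rule vline_integrable[OF Q]) (rule inU[OF that])
  have cd: "c \<in> {c..d}" "d \<in> {c..d}" and ab: "a \<in> {a..b}" "b \<in> {a..b}" using assms(3,4) by auto
  have contPy: "continuous_on U Py" using P unfolding cpart_def by blast
  have cont: "continuous_on (cbox (a,c) (b,d)) (\<lambda>(x,y). Py (Complex x y))"
    by (rule continuous_on_Complex_pair[OF contPy]) (rule inU)
  have "hint P d a b - hint P c a b = integral {a..b} (\<lambda>x. P (Complex x d) - P (Complex x c))"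
    unfolding hint_def by (rule integral_diff[symmetric, OF iP[OF cd(2)] iP[OF cd(1)]])
  also have "\<dots> = integral {a..b} (\<lambda>x. integral {c..d} (\<lambda>y. Py (Complex x y)))"
    by (rule integral_cong) (rule integral_unique[symmetric], rule ftcP)
  also have "\<dots> = integral {c..d} (\<lambda>y. integral {a..b} (\<lambda>x. Py (Complex x y)))"
    using integral_swap_continuous[OF cont] by simp
  also have "\<dots> = integral {c..d} (\<lambda>y. integral {a..b} (\<lambda>x. Qx (Complex x y)))"
    by (intro integral_cong) (simp add: eq inU)
  also have "\<dots> = integral {c..d} (\<lambda>y. Q (Complex b y) - Q (Complex a y))"
    by (rule integral_cong) (rule integral_unique, rule ftcQ)
  also have "\<dots> = vint Q b c d - vint Q a c d"
    unfolding vint_def by (rule integral_diff[OF iQ[OF ab(2)] iQ[OF ab(1)]])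
  finally show ?thesis unfolding bdry_def by (simp add: algebra_simps)
qed

lemma bdry_puncture:
  fixes P :: "complex \<Rightarrow> 'b::banach"
  assumes "cform P Q U" "rect a b c d - {p} \<subseteq> U" "r > 0"
    "a \<le> Re p - r" "Re p + r \<le> b" "c \<le> Im p - r" "Im p + r \<le> d"
  shows "bdry P Q a b c d = bdry P Q (Re p - r) (Re p + r) (Im p - r) (Im p + r)"
proof -
  define x1 x2 y1 y2 where "x1 = Re p - r" "x2 = Re p + r" "y1 = Im p - r" "y2 = Im p + r"
  have U: "Complex x y \<in> U" if "a \<le> x" "x \<le> b" "c \<le> y" "y \<le> d" "x \<noteq> Re p \<or> y \<noteq> Im p" for x y
  proof -
    have "Complex x y \<in> rect a b c d - {p}" using that by (auto simp: in_rect complex_eq_iff)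
    thus ?thesis using assms(2) by blast
  qed
  have o: "x1 < Re p" "Re p < x2" "y1 < Im p" "Im p < y2" using assms(3) by (auto simp: x1_x2_y1_y2_def)
  note bnd = assms(4-7)[folded x1_x2_y1_y2_def]
  have "bdry P Q a b c d = bdry P Q a x1 c d + bdry P Q x1 b c d"
    using o bnd by (intro bdry_split_x[OF assms(1)] conjI U) auto
  also have "bdry P Q x1 b c d = bdry P Q x1 x2 c d + bdry P Q x2 b c d"
    using o bnd by (intro bdry_split_x[OF assms(1)] conjI U) auto
  also have "bdry P Q a x1 c d = 0"
    using o bnd by (intro green_rect[OF assms(1)]) (auto simp: rect_def intro!: U[of "Re z" "Im z" for z, simplified])
  also have "bdry P Q x2 b c d = 0"
    using o bnd by (intro green_rect[OF assms(1)]) (auto simp: rect_def intro!: U[of "Re z" "Im z" for z, simplified])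
  also have "bdry P Q x1 x2 c d = bdry P Q x1 x2 c y1 + bdry P Q x1 x2 y1 d"
    using o bnd by (intro bdry_split_y[OF assms(1)] conjI U) auto
  also have "bdry P Q x1 x2 y1 d = bdry P Q x1 x2 y1 y2 + bdry P Q x1 x2 y2 d"
    using o bnd by (intro bdry_split_y[OF assms(1)] conjI U) auto
  also have "bdry P Q x1 x2 c y1 = 0"
    using o bnd by (intro green_rect[OF assms(1)]) (auto simp: rect_def intro!: U[of "Re z" "Im z" for z, simplified])
  also have "bdry P Q x1 x2 y2 d = 0"
    using o bnd by (intro green_rect[OF assms(1)]) (auto simp: rect_def intro!: U[of "Re z" "Im z" for z, simplified])
  finally show ?thesis by (simp add: x1_x2_y1_y2_def)
qed

abbreviation sqb :: "(complex \<Rightarrow> 'b::banach) \<Rightarrow> (complex \<Rightarrow> 'b) \<Rightarrow> complex \<Rightarrow> real \<Rightarrow> 'b" where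
  "sqb P Q p r \<equiv> bdry P Q (Re p - r) (Re p + r) (Im p - r) (Im p + r)"

lemma bdry_two_x:
  fixes P :: "complex \<Rightarrow> 'b::banach"
  assumes "cform P Q (- {p, q})" "r > 0" "Re p + r < Re q - r"
    "a \<le> Re p - r" "Re p + r \<le> b" "c \<le> Im p - r" "Im p + r \<le> d"
    "a \<le> Re q - r" "Re q + r \<le> b" "c \<le> Im q - r" "Im q + r \<le> d"
  shows "bdry P Q a b c d = sqb P Q p r + sqb P Q q r"
proof -
  define m where "m = (Re p + Re q) / 2"
  have m: "Re p + r < m" "m < Re q - r" using assms(3) by (auto simp: m_def)
  have "bdry P Q a b c d = bdry P Q a m c d + bdry P Q m b c d"
    using m assms by (intro bdry_split_x[OF assms(1)]) (auto simp: complex_eq_iff)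
  also have "bdry P Q a m c d = sqb P Q p r"
    using m assms by (intro bdry_puncture[OF assms(1)]) (auto simp: rect_def)
  also have "bdry P Q m b c d = sqb P Q q r"
    using m assms by (intro bdry_puncture[OF assms(1)]) (auto simp: rect_def)
  finally show ?thesis .
qed

lemma bdry_two_y:
  fixes P :: "complex \<Rightarrow> 'b::banach"
  assumes "cform P Q (- {p, q})" "r > 0" "Im p + r < Im q - r"
    "a \<le> Re p - r" "Re p + r \<le> b" "c \<le> Im p - r" "Im p + r \<le> d"
    "a \<le> Re q - r" "Re q + r \<le> b" "c \<le> Im q - r" "Im q + r \<le> d"
  shows "bdry P Q a b c d = sqb P Q p r + sqb P Q q r"
proof -
  define m where "m = (Im p + Im q) / 2"
  have m: "Im p + r < m" "m < Im q - r" using assms(3) by (auto simp: m_def)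
  have "bdry P Q a b c d = bdry P Q a b c m + bdry P Q a b m d"
    using m assms by (intro bdry_split_y[OF assms(1)]) (auto simp: complex_eq_iff)
  also have "bdry P Q a b c m = sqb P Q p r"
    using m assms by (intro bdry_puncture[OF assms(1)]) (auto simp: rect_def)
  also have "bdry P Q a b m d = sqb P Q q r"
    using m assms by (intro bdry_puncture[OF assms(1)]) (auto simp: rect_def)
  finally show ?thesis .
qed

lemma bdry_two:
  fixes P :: "complex \<Rightarrow> 'b::banach"
  assumes "cform P Q (- {p, q})" "r > 0" "4 * r < cmod (p - q)"
    "a \<le> Re p - r" "Re p + r \<le> b" "c \<le> Im p - r" "Im p + r \<le> d"
    "a \<le> Re q - r" "Re q + r \<le> b" "c \<le> Im q - r" "Im q + r \<le> d"
  shows "bdry P Q a b c d = sqb P Q p r + sqb P Q q r"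
proof -
  have A': "cform P Q (- {q, p})" using assms(1) by (simp add: insert_commute)
  have "cmod (p - q) \<le> \<bar>Re p - Re q\<bar> + \<bar>Im p - Im q\<bar>"
    using cmod_le[of "p - q"] by simp
  hence "2 * r < \<bar>Re p - Re q\<bar> \<or> 2 * r < \<bar>Im p - Im q\<bar>" using assms(3) by linarith
  hence "Re p + r < Re q - r \<or> Re q + r < Re p - r \<or> Im p + r < Im q - r \<or> Im q + r < Im p - r"
    by linarith
  thus ?thesis
  proof (elim disjE)
    assume h: "Re p + r < Re q - r"
    show ?thesis by (rule bdry_two_x[OF assms(1,2) h assms(4-11)])
  next
    assume h: "Re q + r < Re p - r"
    show ?thesis using bdry_two_x[OF A' assms(2) h assms(8-11) assms(4-7)] by (simp add: add.commute)
  next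
    assume h: "Im p + r < Im q - r"
    show ?thesis by (rule bdry_two_y[OF assms(1,2) h assms(4-11)])
  next
    assume h: "Im q + r < Im p - r"
    show ?thesis using bdry_two_y[OF A' assms(2) h assms(8-11) assms(4-7)] by (simp add: add.commute)
  qed
qed

lemma int_bound:
  fixes f :: "real \<Rightarrow> 'b::banach"
  assumes "a \<le> b" "\<And>x. x \<in> {a..b} \<Longrightarrow> norm (f x) \<le> K"
  shows "norm (integral {a..b} f) \<le> K * (b - a)"
proof (cases "f integrable_on {a..b}")
  case True
  have "a \<in> {a..b}" using assms(1) by simp
  hence "norm (f a) \<le> K" by (rule assms(2))
  hence k0: "0 \<le> K" by (rule order.trans[OF norm_ge_zero])
  have "(f has_integral integral {a..b} f) (cbox a b)" using True by (simp add: integrable_integral)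
  from has_integral_bound[OF k0 this] assms show ?thesis by simp
next
  case False
  have "a \<in> {a..b}" using assms(1) by simp
  hence "norm (f a) \<le> K" by (rule assms(2))
  hence k0: "0 \<le> K" by (rule order.trans[OF norm_ge_zero])
  thus ?thesis using False assms(1) by (simp add: not_integrable_integral)
qed

lemma sq_bound:
  fixes P :: "complex \<Rightarrow> 'b::banach"
  assumes "r > 0" "\<And>z. r \<le> cmod (z - p) \<Longrightarrow> cmod (z - p) \<le> 2 * r \<Longrightarrow> norm (P z) \<le> K \<and> norm (Q z) \<le> K"
  shows "norm (sqb P Q p r) \<le> 8 * K * r"
proof -
  have edge: "norm (P z) \<le> K \<and> norm (Q z) \<le> K"
    if "\<bar>Re z - Re p\<bar> \<le> r" "\<bar>Im z - Im p\<bar> \<le> r" "\<bar>Re z - Re p\<bar> = r \<or> \<bar>Im z - Im p\<bar> = r" for z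
  proof (rule assms(2))
    show "r \<le> cmod (z - p)" using that abs_Re_le_cmod[of "z - p"] abs_Im_le_cmod[of "z - p"] by auto
    show "cmod (z - p) \<le> 2 * r" using that cmod_le[of "z - p"] by simp
  qed
  have h: "norm (hint P e (Re p - r) (Re p + r)) \<le> K * ((Re p + r) - (Re p - r))"
    if "e = Im p - r \<or> e = Im p + r" for e
    unfolding hint_def using assms(1) that by (intro int_bound) (auto intro!: edge[THEN conjunct1])
  have v: "norm (vint Q e (Im p - r) (Im p + r)) \<le> K * ((Im p + r) - (Im p - r))"
    if "e = Re p - r \<or> e = Re p + r" for e
    unfolding vint_def using assms(1) that by (intro int_bound) (auto intro!: edge[THEN conjunct2])
  have "norm (sqb P Q p r) \<le> norm (hint P (Im p - r) (Re p - r) (Re p + r)) + norm (vint Q (Re p + r) (Im p - r) (Im p + r))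
     + norm (hint P (Im p + r) (Re p - r) (Re p + r)) + norm (vint Q (Re p - r) (Im p - r) (Im p + r))"
    unfolding bdry_def by (intro order.trans[OF norm_triangle_ineq4] add_mono order.refl
        order.trans[OF norm_triangle_ineq4] order.trans[OF norm_triangle_ineq])
  also have "\<dots> \<le> K * (2 * r) + K * (2 * r) + K * (2 * r) + K * (2 * r)"
    using h[of "Im p - r"] h[of "Im p + r"] v[of "Re p - r"] v[of "Re p + r"] by (intro add_mono) auto
  finally show ?thesis by simp
qed

lemma hline_cont_integrable:
  fixes P :: "complex \<Rightarrow> 'b::banach"
  assumes "continuous_on S P" "\<And>x. x \<in> {a..b} \<Longrightarrow> Complex x c \<in> S"
  shows "(\<lambda>x. P (Complex x c)) integrable_on {a..b}"
proof -
  have "continuous_on {a..b} (\<lambda>x. Complex x c)" unfolding Complex_eq by (intro continuous_intros)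
  hence "continuous_on {a..b} (\<lambda>x. P (Complex x c))"
    using assms by (intro continuous_on_compose2[OF assms(1)]) auto
  thus ?thesis by (rule integrable_continuous_real)
qed

lemma vline_cont_integrable:
  fixes P :: "complex \<Rightarrow> 'b::banach"
  assumes "continuous_on S P" "\<And>y. y \<in> {a..b} \<Longrightarrow> Complex c y \<in> S"
  shows "(\<lambda>y. P (Complex c y)) integrable_on {a..b}"
proof -
  have "continuous_on {a..b} (\<lambda>y. Complex c y)" unfolding Complex_eq by (intro continuous_intros)
  hence "continuous_on {a..b} (\<lambda>y. P (Complex c y))"
    using assms by (intro continuous_on_compose2[OF assms(1)]) auto
  thus ?thesis by (rule integrable_continuous_real)
qed

lemma sq_edges:
  assumes "r > 0" "z \<in> {x. \<exists>t\<in>{-r..r}. x = p + Complex t r \<or> x = p + Complex t (-r) \<or> x = p + Complex r t \<or> x = p + Complex (-r) t}"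
  shows "z \<noteq> p"
  using assms by (auto simp: complex_eq_iff)

lemma bdry_diff:
  fixes P :: "complex \<Rightarrow> 'b::banach"
  assumes "continuous_on S P" "continuous_on S Q" "continuous_on S P0" "continuous_on S Q0"
    "\<And>x. x \<in> {a..b} \<Longrightarrow> Complex x c \<in> S \<and> Complex x d \<in> S"
    "\<And>y. y \<in> {c..d} \<Longrightarrow> Complex a y \<in> S \<and> Complex b y \<in> S"
  shows "bdry (\<lambda>z. P z - P0 z) (\<lambda>z. Q z - Q0 z) a b c d = bdry P Q a b c d - bdry P0 Q0 a b c d"
proof -
  have hh: "hint (\<lambda>z. P z - P0 z) e a b = hint P e a b - hint P0 e a b" if "e = c \<or> e = d" for e
    unfolding hint_def using that assms
    by (intro integral_diff hline_cont_integrable[of S]) auto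
  have vv: "vint (\<lambda>z. Q z - Q0 z) e c d = vint Q e c d - vint Q0 e c d" if "e = a \<or> e = b" for e
    unfolding vint_def using that assms
    by (intro integral_diff vline_cont_integrable[of S]) auto
  show ?thesis unfolding bdry_def using hh[of c] hh[of d] vv[of a] vv[of b] by (simp add: algebra_simps)
qed

section \<open>Model kernel\<close>

lemma arctan_int:
  assumes "r > 0"
  shows "((\<lambda>x. 2 * r / ((x - q)^2 + r^2)) has_integral pi) {q - r..q + r}"
proof -
  have d: "((\<lambda>x. 2 * arctan ((x - q) / r)) has_real_derivative 2 * r / ((x - q)^2 + r^2)) (at x)" for x
  proof -
    have "((\<lambda>x. 2 * arctan ((x - q) / r)) has_real_derivative 2 * (inverse (1 + ((x - q) / r)^2) * (1 / r))) (at x)"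
      using assms by (auto intro!: derivative_eq_intros)
    moreover have "2 * (inverse (1 + ((x - q) / r)^2) * (1 / r)) = 2 * r / ((x - q)^2 + r^2)"
    proof -
      have "r \<noteq> 0" using assms by simp
      thus ?thesis by (simp add: field_simps power2_eq_square)
    qed
    ultimately show ?thesis by simp
  qed
  have "((\<lambda>x. 2 * r / ((x - q)^2 + r^2)) has_integral (2 * arctan (((q + r) - q) / r) - 2 * arctan (((q - r) - q) / r))) {q - r..q + r}"
    using assms by (intro fundamental_theorem_of_calculus)
      (auto simp: has_real_derivative_iff_has_vector_derivative[symmetric] intro: DERIV_subset[OF d])
  moreover have "2 * arctan (((q + r) - q) / r) - 2 * arctan (((q - r) - q) / r) = pi"
    using assms by (simp add: arctan_minus arctan_one)
  ultimately show ?thesis by simp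
qed

definition P0 :: "bicomplex \<Rightarrow> complex \<Rightarrow> complex \<Rightarrow> complex" where
  "P0 c p z = snd (bmult c (bemb (inverse (z - p))))"
definition Q0 :: "bicomplex \<Rightarrow> complex \<Rightarrow> complex \<Rightarrow> complex" where
  "Q0 c p z = fst (bmult c (bemb (inverse (z - p))))"

lemma P0_diff:
  assumes "r > 0"
  shows "P0 c p (Complex x (Im p - r)) - P0 c p (Complex x (Im p + r)) = (2 * r / ((x - Re p)^2 + r^2)) *\<^sub>R fst c"
proof -
  have e1: "Complex x (Im p - r) - p = Complex (x - Re p) (- r)" by (simp add: complex_eq_iff)
  have e2: "Complex x (Im p + r) - p = Complex (x - Re p) r" by (simp add: complex_eq_iff)
  have "0 < (x - Re p)^2 + r^2" using assms by (intro add_nonneg_pos) auto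
  hence n: "(x - Re p)^2 + r^2 \<noteq> 0" by linarith
  show ?thesis unfolding P0_def e1 e2 complex_inverse
    using n by (simp add: bemb_def bmult_def scaleR_conv_of_real field_simps)
qed

lemma Q0_diff:
  assumes "r > 0"
  shows "Q0 c p (Complex (Re p + r) y) - Q0 c p (Complex (Re p - r) y) = (2 * r / ((y - Im p)^2 + r^2)) *\<^sub>R fst c"
proof -
  have e1: "Complex (Re p + r) y - p = Complex r (y - Im p)" by (simp add: complex_eq_iff)
  have e2: "Complex (Re p - r) y - p = Complex (- r) (y - Im p)" by (simp add: complex_eq_iff)
  have "0 < r^2 + (y - Im p)^2" using assms by (intro add_pos_nonneg) auto
  hence n: "r^2 + (y - Im p)^2 \<noteq> 0" by linarith
  show ?thesis unfolding Q0_def e1 e2 complex_inverse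
    using n by (simp add: bemb_def bmult_def scaleR_conv_of_real field_simps)
qed

lemma continuous_bemb: "continuous_on S bemb"
  unfolding bemb_def by (intro continuous_intros)

lemma continuous_on_bmult:
  assumes "continuous_on S f" "continuous_on S g"
  shows "continuous_on S (\<lambda>z. bmult (f z) (g z))"
  using bounded_bilinear.continuous_on[OF bounded_bilinear_bmult assms] .

lemma P0_cont: "continuous_on (- {p}) (P0 c p)" and Q0_cont: "continuous_on (- {p}) (Q0 c p)"
proof -
  have "continuous_on (- {p}) (\<lambda>z. bmult c (bemb (inverse (z - p))))"
    by (intro continuous_on_bmult continuous_on_const continuous_on_compose2[OF continuous_bemb]
        continuous_intros) auto
  thus "continuous_on (- {p}) (P0 c p)" "continuous_on (- {p}) (Q0 c p)"
    unfolding P0_def Q0_def by (auto intro: continuous_on_snd continuous_on_fst)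
qed

lemma model_sq:
  assumes "r > 0"
  shows "sqb (P0 c p) (Q0 c p) p r = (2 * pi) *\<^sub>R fst c"
proof -
  have bot: "Complex x (Im p - r) \<noteq> p" "Complex x (Im p + r) \<noteq> p" for x
    using assms by (auto simp: complex_eq_iff)
  have lr: "Complex (Re p + r) y \<noteq> p" "Complex (Re p - r) y \<noteq> p" for y
    using assms by (auto simp: complex_eq_iff)
  have "hint (P0 c p) (Im p - r) (Re p - r) (Re p + r) - hint (P0 c p) (Im p + r) (Re p - r) (Re p + r)
      = integral {Re p - r..Re p + r} (\<lambda>x. P0 c p (Complex x (Im p - r)) - P0 c p (Complex x (Im p + r)))"
    unfolding hint_def using bot
    by (intro integral_diff[symmetric] hline_cont_integrable[OF P0_cont]) auto
  also have "\<dots> = integral {Re p - r..Re p + r} (\<lambda>x. (2 * r / ((x - Re p)^2 + r^2)) *\<^sub>R fst c)"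
    using P0_diff[OF assms] by simp
  also have "\<dots> = pi *\<^sub>R fst c"
    using has_integral_scaleR_left[OF arctan_int[OF assms, of "Re p"], of "fst c"] by (simp add: integral_unique)
  finally have h: "hint (P0 c p) (Im p - r) (Re p - r) (Re p + r) - hint (P0 c p) (Im p + r) (Re p - r) (Re p + r) = pi *\<^sub>R fst c" .
  have "vint (Q0 c p) (Re p + r) (Im p - r) (Im p + r) - vint (Q0 c p) (Re p - r) (Im p - r) (Im p + r)
      = integral {Im p - r..Im p + r} (\<lambda>y. Q0 c p (Complex (Re p + r) y) - Q0 c p (Complex (Re p - r) y))"
    unfolding vint_def using lr
    by (intro integral_diff[symmetric] vline_cont_integrable[OF Q0_cont]) auto
  also have "\<dots> = integral {Im p - r..Im p + r} (\<lambda>y. (2 * r / ((y - Im p)^2 + r^2)) *\<^sub>R fst c)"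
    using Q0_diff[OF assms] by simp
  also have "\<dots> = pi *\<^sub>R fst c"
    using has_integral_scaleR_left[OF arctan_int[OF assms, of "Im p"], of "fst c"] by (simp add: integral_unique)
  finally have v: "vint (Q0 c p) (Re p + r) (Im p - r) (Im p + r) - vint (Q0 c p) (Re p - r) (Im p - r) (Im p + r) = pi *\<^sub>R fst c" .
  show ?thesis unfolding bdry_def using h v by (simp add: algebra_simps scaleR_conv_of_real)
qed

section \<open>The closed form\<close>

lemma cpart_bmult:
  assumes "cpart D Dx Dy U" "cpart V Vx Vy U" "continuous_on U D" "continuous_on U V"
  shows "cpart (\<lambda>z. bmult (D z) (V z)) (\<lambda>z. bmult (D z) (Vx z) + bmult (Dx z) (V z))
           (\<lambda>z. bmult (D z) (Vy z) + bmult (Dy z) (V z)) U"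
  unfolding cpart_def
proof (intro conjI ballI)
  fix z assume z: "z \<in> U"
  have d1: "((\<lambda>t::real. D (z + complex_of_real t)) has_vector_derivative Dx z) (at 0)"
   and d2: "((\<lambda>t::real. D (z + \<i> * complex_of_real t)) has_vector_derivative Dy z) (at 0)"
   and v1: "((\<lambda>t::real. V (z + complex_of_real t)) has_vector_derivative Vx z) (at 0)"
   and v2: "((\<lambda>t::real. V (z + \<i> * complex_of_real t)) has_vector_derivative Vy z) (at 0)"
    using assms(1,2) z unfolding cpart_def by blast+
  show "((\<lambda>t. bmult (D (z + complex_of_real t)) (V (z + complex_of_real t))) has_vector_derivative
          bmult (D z) (Vx z) + bmult (Dx z) (V z)) (at 0)"
    using bounded_bilinear.has_vector_derivative[OF bounded_bilinear_bmult d1 v1] by simp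
  show "((\<lambda>t. bmult (D (z + \<i> * complex_of_real t)) (V (z + \<i> * complex_of_real t))) has_vector_derivative
          bmult (D z) (Vy z) + bmult (Dy z) (V z)) (at 0)"
    using bounded_bilinear.has_vector_derivative[OF bounded_bilinear_bmult d2 v2] by simp
next
  show "continuous_on U (\<lambda>z. bmult (D z) (Vx z) + bmult (Dx z) (V z))"
    using assms unfolding cpart_def by (intro continuous_on_add continuous_on_bmult) auto
  show "continuous_on U (\<lambda>z. bmult (D z) (Vy z) + bmult (Dy z) (V z))"
    using assms unfolding cpart_def by (intro continuous_on_add continuous_on_bmult) auto
qed

lemma closed_alg:
  assumes "(1/2::real) *\<^sub>R (Dx + bmult bj Dy) = bmult a D + bmult b (bcnj D)"
    "(1/2::real) *\<^sub>R (Vx + bmult bj Vy) = bmult (- a) V + bmult (- bcnj b) (bcnj V)"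
  shows "snd (bmult D Vy + bmult Dy V) = fst (bmult D Vx + bmult Dx V)"
proof -
  have 1: "Dx + bmult bj Dy = 2 *\<^sub>R (bmult a D + bmult b (bcnj D))"
    using arg_cong[OF assms(1), of "scaleR 2"] by simp
  have 2: "Vx + bmult bj Vy = 2 *\<^sub>R (bmult (- a) V + bmult (- bcnj b) (bcnj V))"
    using arg_cong[OF assms(2), of "scaleR 2"] by simp
  have "fst (bmult D Vx + bmult Dx V) - snd (bmult D Vy + bmult Dy V)
      = fst (bmult D (Vx + bmult bj Vy) + bmult (Dx + bmult bj Dy) V)"
    by (simp add: bmult_def bj_def algebra_simps)
  also have "\<dots> = fst (bmult D (2 *\<^sub>R (bmult (- a) V + bmult (- bcnj b) (bcnj V)))
      + bmult (2 *\<^sub>R (bmult a D + bmult b (bcnj D))) V)"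
    unfolding 1 2 ..
  also have "\<dots> = 0"
    by (simp add: bmult_def bcnj_def algebra_simps scaleR_conv_of_real)
  finally show ?thesis by simp
qed

lemma sol_cont:
  assumes "is_solution a b D (- {z0})"
  shows "continuous_on (- {z0}) D"
proof -
  obtain Dx Dy where "has_cont_partials D Dx Dy (- {z0})" using assms unfolding is_solution_def by blast
  thus ?thesis by (intro cpart_continuous) (auto simp: hcp_cpart)
qed

lemma form_DV:
  assumes solD: "is_solution a b D (- {z0})"
    and solV: "is_solution (\<lambda>z. - a z) (\<lambda>z. - bcnj (b z)) V (- {z1})"
  shows "cform (\<lambda>z. snd (bmult (D z) (V z))) (\<lambda>z. fst (bmult (D z) (V z))) (- {z0, z1})"
proof -
  obtain Dx Dy where D: "cpart D Dx Dy (- {z0})"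
    and eqD: "\<And>z. z \<in> - {z0} \<Longrightarrow> (1/2::real) *\<^sub>R (Dx z + bmult bj (Dy z)) = bmult (a z) (D z) + bmult (b z) (bcnj (D z))"
    using solD unfolding is_solution_def hcp_cpart by blast
  obtain Vx Vy where V: "cpart V Vx Vy (- {z1})"
    and eqV: "\<And>z. z \<in> - {z1} \<Longrightarrow> (1/2::real) *\<^sub>R (Vx z + bmult bj (Vy z)) = bmult (- a z) (V z) + bmult (- bcnj (b z)) (bcnj (V z))"
    using solV unfolding is_solution_def hcp_cpart by blast
  define U where "U = - {z0, z1}"
  have sub: "U \<subseteq> - {z0}" "U \<subseteq> - {z1}" by (auto simp: U_def)
  have cD: "continuous_on U D" using sol_cont[OF solD] sub(1) by (rule continuous_on_subset)
  have cV: "continuous_on U V" using sol_cont[OF solV] sub(2) by (rule continuous_on_subset)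
  have H: "cpart (\<lambda>z. bmult (D z) (V z)) (\<lambda>z. bmult (D z) (Vx z) + bmult (Dx z) (V z))
           (\<lambda>z. bmult (D z) (Vy z) + bmult (Dy z) (V z)) U"
    by (rule cpart_bmult[OF cpart_subset[OF D sub(1)] cpart_subset[OF V sub(2)] cD cV])
  have P: "cpart (\<lambda>z. snd (bmult (D z) (V z))) (\<lambda>z. snd (bmult (D z) (Vx z) + bmult (Dx z) (V z)))
           (\<lambda>z. snd (bmult (D z) (Vy z) + bmult (Dy z) (V z))) U"
    by (rule cpart_linear[OF bounded_linear_snd H])
  have Q: "cpart (\<lambda>z. fst (bmult (D z) (V z))) (\<lambda>z. fst (bmult (D z) (Vx z) + bmult (Dx z) (V z)))
           (\<lambda>z. fst (bmult (D z) (Vy z) + bmult (Dy z) (V z))) U"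
    by (rule cpart_linear[OF bounded_linear_fst H])
  have cl: "\<forall>z\<in>U. snd (bmult (D z) (Vy z) + bmult (Dy z) (V z)) = fst (bmult (D z) (Vx z) + bmult (Dx z) (V z))"
  proof
    fix z assume "z \<in> U"
    hence "z \<in> - {z0}" "z \<in> - {z1}" using sub by auto
    from closed_alg[OF eqD[OF this(1)] eqV[OF this(2)]]
    show "snd (bmult (D z) (Vy z) + bmult (Dy z) (V z)) = fst (bmult (D z) (Vx z) + bmult (Dx z) (V z))" .
  qed
  show ?thesis unfolding cform_def U_def[symmetric] using P Q cl by blast
qed

lemma sq_bound_H:
  fixes H :: "complex \<Rightarrow> bicomplex"
  assumes "r > 0" "\<And>z. r \<le> cmod (z - p) \<Longrightarrow> cmod (z - p) \<le> 2 * r \<Longrightarrow> norm (H z) \<le> K"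
  shows "norm (sqb (\<lambda>z. snd (H z)) (\<lambda>z. fst (H z)) p r) \<le> 8 * K * r"
  using assms(1) by (rule sq_bound) (metis assms(2) norm_fst_le norm_snd_le order.trans)

lemma norm_bmult_bemb: "norm (bmult (bemb w) X) \<le> 4 * cmod w * norm X"
  using norm_bmult[of "bemb w" X] by (simp add: norm_bemb)

lemma bemb_cancel: "z \<noteq> p \<Longrightarrow> bmult (bemb (inverse (z - p))) (bmult (bemb (z - p)) X) = X"
  by (simp add: bmult_assoc[symmetric] bemb_inv)

lemma norm_via_pole:
  assumes "z \<noteq> p" "norm (bmult (bemb (z - p)) X) \<le> e"
  shows "norm X \<le> 4 * e / cmod (z - p)"
proof -
  have "norm X = norm (bmult (bemb (inverse (z - p))) (bmult (bemb (z - p)) X))"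
    using bemb_cancel[OF assms(1)] by simp
  also have "\<dots> \<le> 4 * cmod (inverse (z - p)) * norm (bmult (bemb (z - p)) X)" by (rule norm_bmult_bemb)
  also have "\<dots> \<le> 4 * cmod (inverse (z - p)) * e" using assms(2) by (intro mult_left_mono) auto
  finally show ?thesis by (simp add: norm_inverse divide_inverse mult.commute mult.left_commute)
qed

lemma est_z0:
  fixes D V :: "complex \<Rightarrow> bicomplex"
  assumes limD: "((\<lambda>z. bmult (bemb (z - z0)) (D z)) \<longlongrightarrow> 0) (at z0)"
    and contV: "isCont V z0" and e: "\<epsilon> > 0"
  shows "\<exists>\<delta>>0. \<forall>r. 0 < r \<and> r < \<delta> \<longrightarrow>
     norm (sqb (\<lambda>z. snd (bmult (D z) (V z))) (\<lambda>z. fst (bmult (D z) (V z))) z0 r) \<le> \<epsilon>"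
proof -
  define C where "C = norm (V z0) + 1"
  have C: "C > 0" by (simp add: C_def add_nonneg_pos)
  obtain d1 where d1: "d1 > 0" "\<And>z. z \<noteq> z0 \<and> dist z z0 < d1 \<Longrightarrow> dist (V z) (V z0) < 1"
    using metric_LIM_D[OF contV[unfolded isCont_def], of 1] by auto
  define \<eta> where "\<eta> = \<epsilon> / (128 * C)"
  have eta: "\<eta> > 0" using e C by (simp add: \<eta>_def)
  obtain d2 where d2: "d2 > 0" "\<And>z. z \<noteq> z0 \<and> dist z z0 < d2 \<Longrightarrow> dist (bmult (bemb (z - z0)) (D z)) 0 < \<eta>"
    using metric_LIM_D[OF limD eta] by auto
  define \<delta> where "\<delta> = min d1 d2 / 2"
  have "\<delta> > 0" using d1 d2 by (simp add: \<delta>_def)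
  moreover have "norm (sqb (\<lambda>z. snd (bmult (D z) (V z))) (\<lambda>z. fst (bmult (D z) (V z))) z0 r) \<le> \<epsilon>"
    if r: "0 < r" "r < \<delta>" for r
  proof -
    have "norm (sqb (\<lambda>z. snd (bmult (D z) (V z))) (\<lambda>z. fst (bmult (D z) (V z))) z0 r) \<le> 8 * (16 * \<eta> * C / r) * r"
    proof (rule sq_bound_H[OF r(1)])
      fix z assume z: "r \<le> cmod (z - z0)" "cmod (z - z0) \<le> 2 * r"
      have zne: "z \<noteq> z0" using z r by auto
      have dz: "dist z z0 < d1" "dist z z0 < d2" using z r by (auto simp: dist_norm \<delta>_def)
      have "norm (V z) \<le> norm (V z0) + dist (V z) (V z0)"
        by (metis dist_norm norm_triangle_sub add.commute)
      hence nV: "norm (V z) \<le> C" using d1(2)[of z] zne dz by (simp add: C_def)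
      have "norm (bmult (bemb (z - z0)) (D z)) \<le> \<eta>" using d2(2)[of z] zne dz by simp
      hence "norm (D z) \<le> 4 * \<eta> / cmod (z - z0)" by (rule norm_via_pole[OF zne])
      also have "\<dots> \<le> 4 * \<eta> / r"
      proof (rule divide_left_mono)
        show "r \<le> cmod (z - z0)" "0 \<le> 4 * \<eta>" using z eta by auto
        have "0 < cmod (z - z0)" using z r by linarith
        thus "0 < cmod (z - z0) * r" using r by simp
      qed
      finally have nD: "norm (D z) \<le> 4 * \<eta> / r" .
      have "norm (bmult (D z) (V z)) \<le> 4 * norm (D z) * norm (V z)" by (rule norm_bmult)
      also have "\<dots> \<le> 4 * (4 * \<eta> / r) * C"
        using nD nV eta r by (intro mult_mono) auto
      finally show "norm (bmult (D z) (V z)) \<le> 16 * \<eta> * C / r" by simp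
    qed
    also have "\<dots> = \<epsilon>" using r C by (simp add: \<eta>_def field_simps)
    finally show ?thesis .
  qed
  ultimately show ?thesis by blast
qed

lemma M_decomp:
  assumes "z \<noteq> p"
  shows "bmult Dz Vz - bmult (bmult Dp \<alpha>) (bemb (inverse (z - p))) =
    bmult (Dz - Dp) Vz + bmult Dp (bmult (bemb (inverse (z - p))) (bmult (bemb (z - p)) Vz - \<alpha>))"
  using assms by (simp add: bmult_diff_right bmult_diff_left bemb_cancel bmult_assoc bmult_comm[of \<alpha>])

lemma near_sq:
  assumes "\<bar>Re z - Re p\<bar> \<le> r" "\<bar>Im z - Im p\<bar> \<le> r"
  shows "cmod (z - p) \<le> 2 * r"
  using assms cmod_le[of "z - p"] by simp

lemma est_z1:
  fixes D V :: "complex \<Rightarrow> bicomplex"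
  assumes contD: "isCont D z1" and limV: "((\<lambda>z. bmult (bemb (z - z1)) (V z)) \<longlongrightarrow> \<alpha>) (at z1)"
    and contH: "continuous_on (- {z0, z1}) (\<lambda>z. bmult (D z) (V z))"
    and ne: "z0 \<noteq> z1" and e: "\<epsilon> > 0"
  shows "\<exists>\<delta>>0. \<forall>r. 0 < r \<and> r < \<delta> \<longrightarrow>
     norm (sqb (\<lambda>z. snd (bmult (D z) (V z))) (\<lambda>z. fst (bmult (D z) (V z))) z1 r
        - (2 * pi) *\<^sub>R fst (bmult (D z1) \<alpha>)) \<le> \<epsilon>"
proof -
  define c where "c = bmult (D z1) \<alpha>"
  define A where "A = norm \<alpha> + 1 + norm (D z1)"
  have A: "A > 0" by (simp add: A_def add_pos_nonneg add_nonneg_pos)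
  define \<eta> where "\<eta> = min 1 (\<epsilon> / (128 * A))"
  have eta: "\<eta> > 0" "\<eta> \<le> 1" "\<eta> \<le> \<epsilon> / (128 * A)" using e A by (auto simp: \<eta>_def)
  obtain d1 where d1: "d1 > 0" "\<And>z. z \<noteq> z1 \<and> dist z z1 < d1 \<Longrightarrow> dist (D z) (D z1) < \<eta>"
    using metric_LIM_D[OF contD[unfolded isCont_def] eta(1)] by auto
  obtain d2 where d2: "d2 > 0" "\<And>z. z \<noteq> z1 \<and> dist z z1 < d2 \<Longrightarrow> dist (bmult (bemb (z - z1)) (V z)) \<alpha> < \<eta>"
    using metric_LIM_D[OF limV eta(1)] by auto
  have n01: "cmod (z0 - z1) > 0" using ne by simp
  define \<delta> where "\<delta> = min (min d1 d2) (cmod (z0 - z1)) / 2"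
  have "\<delta> > 0" using d1 d2 n01 by (simp add: \<delta>_def)
  moreover have "norm (sqb (\<lambda>z. snd (bmult (D z) (V z))) (\<lambda>z. fst (bmult (D z) (V z))) z1 r
        - (2 * pi) *\<^sub>R fst c) \<le> \<epsilon>" if r: "0 < r" "r < \<delta>" for r
  proof -
    define M where "M z = bmult (D z) (V z) - bmult c (bemb (inverse (z - z1)))" for z
    have inS: "z \<in> - {z0, z1}" if "\<bar>Re z - Re z1\<bar> \<le> r" "\<bar>Im z - Im z1\<bar> \<le> r"
      "\<bar>Re z - Re z1\<bar> = r \<or> \<bar>Im z - Im z1\<bar> = r" for z
    proof -
      have "z \<noteq> z1" using that r by (auto simp: complex_eq_iff)
      moreover have "cmod (z - z1) \<le> 2 * r" by (rule near_sq[OF that(1,2)])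
      hence "z \<noteq> z0" using r by (auto simp: \<delta>_def)
      ultimately show ?thesis by simp
    qed
    have cS: "continuous_on (- {z0, z1}) (P0 c z1)" "continuous_on (- {z0, z1}) (Q0 c z1)"
      by (rule continuous_on_subset[OF P0_cont], force, rule continuous_on_subset[OF Q0_cont], force)
    have "sqb (\<lambda>z. snd (bmult (D z) (V z))) (\<lambda>z. fst (bmult (D z) (V z))) z1 r - (2 * pi) *\<^sub>R fst c
        = sqb (\<lambda>z. snd (bmult (D z) (V z))) (\<lambda>z. fst (bmult (D z) (V z))) z1 r - sqb (P0 c z1) (Q0 c z1) z1 r"
      using model_sq[OF r(1)] by simp
    also have "\<dots> = sqb (\<lambda>z. snd (bmult (D z) (V z)) - P0 c z1 z) (\<lambda>z. fst (bmult (D z) (V z)) - Q0 c z1 z) z1 r"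
      using r by (intro bdry_diff[where S = "- {z0, z1}", symmetric] continuous_on_snd continuous_on_fst contH cS conjI inS) auto
    also have "\<dots> = sqb (\<lambda>z. snd (M z)) (\<lambda>z. fst (M z)) z1 r"
      by (simp add: M_def P0_def Q0_def)
    finally have eq: "sqb (\<lambda>z. snd (bmult (D z) (V z))) (\<lambda>z. fst (bmult (D z) (V z))) z1 r - (2 * pi) *\<^sub>R fst c
        = sqb (\<lambda>z. snd (M z)) (\<lambda>z. fst (M z)) z1 r" .
    have "norm (sqb (\<lambda>z. snd (M z)) (\<lambda>z. fst (M z)) z1 r) \<le> 8 * (16 * \<eta> * A / r) * r"
    proof (rule sq_bound_H[OF r(1)])
      fix z assume z: "r \<le> cmod (z - z1)" "cmod (z - z1) \<le> 2 * r"
      have zne: "z \<noteq> z1" using z r by auto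
      have cz: "0 < cmod (z - z1)" using zne by simp
      have dz: "dist z z1 < d1" "dist z z1 < d2" using z r by (auto simp: dist_norm \<delta>_def)
      define G where "G = bmult (bemb (z - z1)) (V z)"
      have hG: "norm (G - \<alpha>) \<le> \<eta>" using d2(2)[of z] zne dz by (simp add: G_def dist_norm)
      have hD: "norm (D z - D z1) \<le> \<eta>" using d1(2)[of z] zne dz by (simp add: dist_norm)
      have "norm G \<le> norm \<alpha> + norm (G - \<alpha>)" by (metis add_diff_cancel_left' norm_triangle_ineq add.commute diff_add_cancel)
      hence "norm G \<le> norm \<alpha> + 1" using hG eta by linarith
      hence nV: "norm (V z) \<le> 4 * (norm \<alpha> + 1) / cmod (z - z1)"
        using norm_via_pole[OF zne, of "V z" "norm \<alpha> + 1"] unfolding G_def by blast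
      have Mz: "M z = bmult (D z - D z1) (V z) + bmult (D z1) (bmult (bemb (inverse (z - z1))) (G - \<alpha>))"
        unfolding M_def c_def G_def by (rule M_decomp[OF zne])
      have t1: "norm (bmult (D z - D z1) (V z)) \<le> 4 * \<eta> * (4 * (norm \<alpha> + 1) / cmod (z - z1))"
      proof -
        have "4 * norm (D z - D z1) * norm (V z) \<le> 4 * \<eta> * (4 * (norm \<alpha> + 1) / cmod (z - z1))"
          using hD nV eta by (intro mult_mono) auto
        thus ?thesis using norm_bmult[of "D z - D z1" "V z"] by linarith
      qed
      have "norm (bmult (bemb (inverse (z - z1))) (G - \<alpha>)) \<le> 4 * cmod (inverse (z - z1)) * norm (G - \<alpha>)"
        by (rule norm_bmult_bemb)
      also have "\<dots> \<le> 4 * cmod (inverse (z - z1)) * \<eta>" using hG by (intro mult_left_mono) auto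
      finally have t2a: "norm (bmult (bemb (inverse (z - z1))) (G - \<alpha>)) \<le> 4 * \<eta> / cmod (z - z1)"
        by (simp add: norm_inverse divide_inverse mult.commute mult.left_commute)
      have t2: "norm (bmult (D z1) (bmult (bemb (inverse (z - z1))) (G - \<alpha>))) \<le> 4 * norm (D z1) * (4 * \<eta> / cmod (z - z1))"
      proof -
        have "4 * norm (D z1) * norm (bmult (bemb (inverse (z - z1))) (G - \<alpha>)) \<le> 4 * norm (D z1) * (4 * \<eta> / cmod (z - z1))"
          using t2a by (intro mult_left_mono) auto
        thus ?thesis using norm_bmult[of "D z1" "bmult (bemb (inverse (z - z1))) (G - \<alpha>)"] by linarith
      qed
      have "norm (M z) \<le> 4 * \<eta> * (4 * (norm \<alpha> + 1) / cmod (z - z1)) + 4 * norm (D z1) * (4 * \<eta> / cmod (z - z1))"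
      proof -
        have "norm (M z) \<le> norm (bmult (D z - D z1) (V z)) + norm (bmult (D z1) (bmult (bemb (inverse (z - z1))) (G - \<alpha>)))"
          unfolding Mz by (rule norm_triangle_ineq)
        thus ?thesis using t1 t2 by linarith
      qed
      also have "\<dots> = 16 * \<eta> * A / cmod (z - z1)" using cz by (simp add: A_def field_simps)
      also have "\<dots> \<le> 16 * \<eta> * A / r"
        using z r eta A by (intro divide_left_mono) (auto intro!: mult_pos_pos)
      finally show "norm (M z) \<le> 16 * \<eta> * A / r" .
    qed
    also have "\<dots> = 128 * \<eta> * A" using r by (simp add: field_simps)
    also have "\<dots> \<le> \<epsilon>" using eta A by (simp add: field_simps)
    finally show ?thesis using eq by simp
  qed
  ultimately show ?thesis unfolding c_def by blast
qed

lemma big_nonneg: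
  assumes "\<exists>R M. \<forall>z. R \<le> cmod z \<longrightarrow> cmod z * norm (D z) \<le> M"
  shows "\<exists>R M. R > 0 \<and> M \<ge> 0 \<and> (\<forall>z. R \<le> cmod z \<longrightarrow> norm (D z) \<le> M / cmod z)"
proof -
  obtain R M where RM: "\<forall>z. R \<le> cmod z \<longrightarrow> cmod z * norm (D z) \<le> M" using assms by blast
  define R' where "R' = max R 1"
  define M' where "M' = max M 0"
  have "norm (D z) \<le> M' / cmod z" if "R' \<le> cmod z" for z
  proof -
    have "1 \<le> cmod z" using that by (simp add: R'_def)
    hence "cmod z > 0" by linarith
    moreover have "cmod z * norm (D z) \<le> M'" using RM that by (force simp: R'_def M'_def)
    ultimately show ?thesis by (simp add: field_simps)
  qed
  moreover have "R' > 0" "M' \<ge> 0" by (auto simp: R'_def M'_def)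
  ultimately show ?thesis by blast
qed

lemma vanish:
  fixes a b D V :: "complex \<Rightarrow> bicomplex"
  assumes solD: "is_solution a b D (- {z0})"
    and limD: "((\<lambda>z. bmult (bemb (z - z0)) (D z)) \<longlongrightarrow> 0) (at z0)"
    and bigD: "\<exists>R M. \<forall>z. R \<le> cmod z \<longrightarrow> cmod z * norm (D z) \<le> M"
    and solV: "is_solution (\<lambda>z. - a z) (\<lambda>z. - bcnj (b z)) V (- {z1})"
    and limV: "((\<lambda>z. bmult (bemb (z - z1)) (V z)) \<longlongrightarrow> \<alpha>) (at z1)"
    and bigV: "\<exists>R M. \<forall>z. R \<le> cmod z \<longrightarrow> cmod z * norm (V z) \<le> M"
    and ne: "z0 \<noteq> z1"
  shows "fst (bmult (D z1) \<alpha>) = 0"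
proof -
  define P where "P z = snd (bmult (D z) (V z))" for z
  define Q where "Q z = fst (bmult (D z) (V z))" for z
  have cf: "cform P Q (- {z0, z1})" unfolding P_def Q_def by (rule form_DV[OF solD solV])
  have cD: "continuous_on (- {z0}) D" by (rule sol_cont[OF solD])
  have cV: "continuous_on (- {z1}) V" by (rule sol_cont[OF solV])
  have iD: "isCont D z1"
    using cD ne by (simp add: continuous_on_eq_continuous_at open_Compl)
  have iV: "isCont V z0"
    using cV ne by (simp add: continuous_on_eq_continuous_at open_Compl)
  have contH: "continuous_on (- {z0, z1}) (\<lambda>z. bmult (D z) (V z))"
    by (intro continuous_on_bmult continuous_on_subset[OF cD] continuous_on_subset[OF cV]) auto
  define L where "L = (2 * pi) *\<^sub>R fst (bmult (D z1) \<alpha>)"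
  obtain R1 M1 where RM1: "R1 > 0" "M1 \<ge> 0" "\<And>z. R1 \<le> cmod z \<Longrightarrow> norm (D z) \<le> M1 / cmod z"
    using big_nonneg[OF bigD] by blast
  obtain R2 M2 where RM2: "R2 > 0" "M2 \<ge> 0" "\<And>z. R2 \<le> cmod z \<Longrightarrow> norm (V z) \<le> M2 / cmod z"
    using big_nonneg[OF bigV] by blast
  have small: "norm L \<le> \<epsilon>" if e: "\<epsilon> > 0" for \<epsilon>
  proof -
    have e3: "\<epsilon> / 3 > 0" using e by simp
    obtain \<delta>0 where d0: "\<delta>0 > 0" "\<And>r. 0 < r \<and> r < \<delta>0 \<Longrightarrow> norm (sqb P Q z0 r) \<le> \<epsilon> / 3"
      using est_z0[OF limD iV e3] unfolding P_def Q_def by blast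
    obtain \<delta>1 where d1: "\<delta>1 > 0" "\<And>r. 0 < r \<and> r < \<delta>1 \<Longrightarrow> norm (sqb P Q z1 r - L) \<le> \<epsilon> / 3"
      using est_z1[OF iD limV contH ne e3] unfolding P_def Q_def L_def by blast
    have n01: "cmod (z0 - z1) > 0" using ne by simp
    define m where "m = min (min \<delta>0 \<delta>1) (min 1 (cmod (z0 - z1) / 8))"
    have m: "0 < m" "m \<le> \<delta>0" "m \<le> \<delta>1" "m \<le> 1" "m \<le> cmod (z0 - z1) / 8"
      using d0(1) d1(1) n01 by (auto simp: m_def)
    define r where "r = m / 2"
    have r: "0 < r" "r < \<delta>0" "r < \<delta>1" "r \<le> 1" "4 * r < cmod (z0 - z1)"
      using m n01 unfolding r_def by linarith+
    define X where "X = max (max R1 R2) (cmod z0 + cmod z1 + 2)"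
    have X: "R1 \<le> X" "R2 \<le> X" "cmod z0 + cmod z1 + 2 \<le> X" by (auto simp: X_def)
    have q: "0 \<le> 96 * M1 * M2 / \<epsilon>" using RM1(2) RM2(2) e by simp
    have cm: "0 \<le> cmod z0 + cmod z1" by simp
    define R where "R = X + 96 * M1 * M2 / \<epsilon> + 1"
    have Rge: "R1 \<le> R" "R2 \<le> R" "cmod z0 + cmod z1 + 2 \<le> R" "96 * M1 * M2 / \<epsilon> \<le> R"
      using X q cm unfolding R_def by linarith+
    have R0: "R > 0" using Rge(1) RM1(1) by linarith
    have bigb: "norm (sqb P Q 0 R) \<le> 8 * (4 * M1 * M2 / R^2) * R"
      unfolding P_def Q_def
    proof (rule sq_bound_H[OF R0])
      fix z assume z: "R \<le> cmod (z - 0)" "cmod (z - 0) \<le> 2 * R"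
      have zR: "R \<le> cmod z" using z by simp
      have cz: "cmod z > 0" using zR R0 by linarith
      have zRR: "0 < cmod z * R" using cz R0 by simp
      have nD: "norm (D z) \<le> M1 / R"
        using RM1(3)[of z] zR Rge(1) divide_left_mono[OF zR RM1(2) zRR] by linarith
      have nV: "norm (V z) \<le> M2 / R"
        using RM2(3)[of z] zR Rge(2) divide_left_mono[OF zR RM2(2) zRR] by linarith
      have "norm (bmult (D z) (V z)) \<le> 4 * norm (D z) * norm (V z)" by (rule norm_bmult)
      also have "\<dots> \<le> 4 * (M1 / R) * (M2 / R)"
        using nD nV RM1(2) R0 by (intro mult_mono) auto
      finally show "norm (bmult (D z) (V z)) \<le> 4 * M1 * M2 / R^2" by (simp add: power2_eq_square)
    qed
    have "8 * (4 * M1 * M2 / R^2) * R = 32 * M1 * M2 / R" using R0 by (simp add: power2_eq_square field_simps)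
    also have "\<dots> \<le> \<epsilon> / 3"
    proof -
      have "96 * M1 * M2 \<le> R * \<epsilon>" using Rge(4) e by (simp add: field_simps)
      thus ?thesis using R0 by (simp add: field_simps)
    qed
    finally have big: "norm (sqb P Q 0 R) \<le> \<epsilon> / 3" using bigb by linarith
    have a0: "\<bar>Re z0\<bar> \<le> cmod z0" "\<bar>Im z0\<bar> \<le> cmod z0" "\<bar>Re z1\<bar> \<le> cmod z1" "\<bar>Im z1\<bar> \<le> cmod z1"
      by (auto simp: abs_Re_le_cmod abs_Im_le_cmod)
    have two: "bdry P Q (- R) R (- R) R = sqb P Q z0 r + sqb P Q z1 r"
      using a0 Rge(3) r(4) by (intro bdry_two[OF cf r(1) r(5)]) (auto simp: abs_le_iff)
    have "L = sqb P Q 0 R - sqb P Q z0 r - (sqb P Q z1 r - L)" using two by simp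
    hence "norm L \<le> norm (sqb P Q 0 R - sqb P Q z0 r) + norm (sqb P Q z1 r - L)"
      by (metis norm_triangle_ineq4)
    moreover have "norm (sqb P Q 0 R - sqb P Q z0 r) \<le> norm (sqb P Q 0 R) + norm (sqb P Q z0 r)"
      by (rule norm_triangle_ineq4)
    ultimately have "norm L \<le> norm (sqb P Q 0 R) + norm (sqb P Q z0 r) + norm (sqb P Q z1 r - L)"
      by linarith
    also have "\<dots> \<le> \<epsilon> / 3 + \<epsilon> / 3 + \<epsilon> / 3"
      using big d0(2)[of r] d1(2)[of r] r by (intro add_mono) auto
    finally show ?thesis by simp
  qed
  have "L = 0"
  proof (rule ccontr)
    assume "L \<noteq> 0"
    hence "norm L / 2 > 0" by simp
    from small[OF this] \<open>L \<noteq> 0\<close> show False by simp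
  qed
  thus ?thesis by (simp add: L_def)
qed

lemma sol_diff:
  assumes "is_solution a b W S" "is_solution a b W' S"
  shows "is_solution a b (\<lambda>z. W z - W' z) S"
proof -
  obtain Wx Wy where W: "cpart W Wx Wy S"
    and eW: "\<And>z. z \<in> S \<Longrightarrow> (1/2::real) *\<^sub>R (Wx z + bmult bj (Wy z)) = bmult (a z) (W z) + bmult (b z) (bcnj (W z))"
    using assms(1) unfolding is_solution_def hcp_cpart by blast
  obtain Wx' Wy' where W': "cpart W' Wx' Wy' S"
    and eW': "\<And>z. z \<in> S \<Longrightarrow> (1/2::real) *\<^sub>R (Wx' z + bmult bj (Wy' z)) = bmult (a z) (W' z) + bmult (b z) (bcnj (W' z))"
    using assms(2) unfolding is_solution_def hcp_cpart by blast
  have "cpart (\<lambda>z. W z - W' z) (\<lambda>z. Wx z - Wx' z) (\<lambda>z. Wy z - Wy' z) S" by (rule cpart_diff[OF W W'])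
  moreover have "(1/2::real) *\<^sub>R ((Wx z - Wx' z) + bmult bj (Wy z - Wy' z)) =
      bmult (a z) (W z - W' z) + bmult (b z) (bcnj (W z - W' z))" if "z \<in> S" for z
  proof -
    have "(1/2::real) *\<^sub>R ((Wx z - Wx' z) + bmult bj (Wy z - Wy' z)) =
        (1/2::real) *\<^sub>R (Wx z + bmult bj (Wy z)) - (1/2::real) *\<^sub>R (Wx' z + bmult bj (Wy' z))"
      by (simp add: bmult_diff_right algebra_simps)
    also have "\<dots> = bmult (a z) (W z - W' z) + bmult (b z) (bcnj (W z - W' z))"
      using eW[OF that] eW'[OF that] by (simp add: bmult_diff_right bcnj_diff)
    finally show ?thesis .
  qed
  ultimately show ?thesis unfolding is_solution_def hcp_cpart by blast
qed

lemma bigO_norm: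
  assumes "big_O_inv W"
  shows "\<exists>R M. \<forall>z. R \<le> cmod z \<longrightarrow> cmod z * norm (W z) \<le> M"
proof -
  obtain R M where RM: "\<And>z. R \<le> cmod z \<Longrightarrow> cmod z * bnorm (W z) \<le> M"
    using assms unfolding big_O_inv_def by blast
  have "cmod z * norm (W z) \<le> 2 * M" if "R \<le> cmod z" for z
  proof -
    have "cmod z * norm (W z) \<le> cmod z * (2 * bnorm (W z))"
      by (intro mult_left_mono bnorm_ge) auto
    thus ?thesis using RM[OF that] by simp
  qed
  thus ?thesis by blast
qed

lemma bigO_norm_diff:
  assumes "big_O_inv W" "big_O_inv W'"
  shows "\<exists>R M. \<forall>z. R \<le> cmod z \<longrightarrow> cmod z * norm (W z - W' z) \<le> M"
proof -
  obtain R M where RM: "\<And>z. R \<le> cmod z \<Longrightarrow> cmod z * norm (W z) \<le> M" using bigO_norm[OF assms(1)] by blast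
  obtain R' M' where RM': "\<And>z. R' \<le> cmod z \<Longrightarrow> cmod z * norm (W' z) \<le> M'" using bigO_norm[OF assms(2)] by blast
  have "cmod z * norm (W z - W' z) \<le> M + M'" if "max R R' \<le> cmod z" for z
  proof -
    have "cmod z * norm (W z - W' z) \<le> cmod z * (norm (W z) + norm (W' z))"
      by (intro mult_left_mono norm_triangle_ineq4) auto
    thus ?thesis using RM[of z] RM'[of z] that by (simp add: distrib_left)
  qed
  thus ?thesis by blast
qed

lemma diff_zero:
  fixes a b :: "complex \<Rightarrow> bicomplex"
  assumes "is_solution a b K (- {z0})" "is_solution a b K' (- {z0})"
    "((\<lambda>z. bmult (bemb (z - z0)) (K z)) \<longlongrightarrow> \<beta>) (at z0)"
    "((\<lambda>z. bmult (bemb (z - z0)) (K' z)) \<longlongrightarrow> \<beta>) (at z0)"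
    "big_O_inv K" "big_O_inv K'"
    "decaying_kernel (\<lambda>z. - a z) (\<lambda>z. - bcnj (b z)) V1 Vj" "z \<noteq> z0"
  shows "K z = K' z"
proof -
  define D where "D w = K w - K' w" for w
  have solD: "is_solution a b D (- {z0})" unfolding D_def by (rule sol_diff[OF assms(1,2)])
  have limD: "((\<lambda>w. bmult (bemb (w - z0)) (D w)) \<longlongrightarrow> 0) (at z0)"
    using tendsto_diff[OF assms(3,4)] by (simp add: D_def bmult_diff_right)
  have bigD: "\<exists>R M. \<forall>w. R \<le> cmod w \<longrightarrow> cmod w * norm (D w) \<le> M"
    unfolding D_def by (rule bigO_norm_diff[OF assms(5,6)])
  have ck: "cauchy_kernel (\<lambda>z. - a z) (\<lambda>z. - bcnj (b z)) V1 Vj" and bo: "\<And>w. big_O_inv (V1 w) \<and> big_O_inv (Vj w)"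
    using assms(7) unfolding decaying_kernel_def by auto
  have s1: "is_solution (\<lambda>z. - a z) (\<lambda>z. - bcnj (b z)) (V1 z) (- {z})"
    and s2: "is_solution (\<lambda>z. - a z) (\<lambda>z. - bcnj (b z)) (Vj z) (- {z})"
    and l1: "((\<lambda>w. bmult (bemb (w - z)) (V1 z w)) \<longlongrightarrow> bone) (at z)"
    and l2: "((\<lambda>w. bmult (bemb (w - z)) (Vj z w)) \<longlongrightarrow> bj) (at z)"
    using ck unfolding cauchy_kernel_def by auto
  have ne: "z0 \<noteq> z" using assms(8) by simp
  have f1: "fst (bmult (D z) bone) = 0"
    by (rule vanish[OF solD limD bigD s1 l1 bigO_norm ne]) (use bo in blast)
  have f2: "fst (bmult (D z) bj) = 0"
    by (rule vanish[OF solD limD bigD s2 l2 bigO_norm ne]) (use bo in blast)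
  have "D z = 0" using f1 f2 by (simp add: bmult_def bone_def bj_def prod_eq_iff)
  thus ?thesis by (simp add: D_def)
qed

lemma kernel_unique:
  fixes a b :: "complex \<Rightarrow> bicomplex"
  assumes "decaying_kernel a b Z1 Zj" "decaying_kernel a b Z1' Zj'"
    "decaying_kernel (\<lambda>z. - a z) (\<lambda>z. - bcnj (b z)) V1 Vj" "z \<noteq> z0"
  shows "Z1 z0 z = Z1' z0 z \<and> Zj z0 z = Zj' z0 z"
proof -
  have A: "cauchy_kernel a b Z1 Zj" "\<And>w. big_O_inv (Z1 w) \<and> big_O_inv (Zj w)"
    using assms(1) unfolding decaying_kernel_def by auto
  have B: "cauchy_kernel a b Z1' Zj'" "\<And>w. big_O_inv (Z1' w) \<and> big_O_inv (Zj' w)"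
    using assms(2) unfolding decaying_kernel_def by auto
  show ?thesis
  proof
    show "Z1 z0 z = Z1' z0 z"
      using A B by (intro diff_zero[where \<beta> = bone, OF _ _ _ _ _ _ assms(3,4)]) (auto simp: cauchy_kernel_def)
    show "Zj z0 z = Zj' z0 z"
      using A B by (intro diff_zero[where \<beta> = bj, OF _ _ _ _ _ _ assms(3,4)]) (auto simp: cauchy_kernel_def)
  qed
qed

lemma adj_adj_a: "(\<lambda>z. - (- a z)) = (a :: complex \<Rightarrow> bicomplex)" by simp
lemma adj_adj_b: "(\<lambda>z. - bcnj (- bcnj (b z))) = (b :: complex \<Rightarrow> bicomplex)" by (simp add: bcnj_def)

theorem mainTheorem5:
  fixes a b :: "complex \<Rightarrow> bicomplex"
  assumes "hoelder_continuous a" and "hoelder_continuous b"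
    and "\<exists>Z1 Zj. decaying_kernel a b Z1 Zj"
    and "\<exists>Z1 Zj. decaying_kernel (\<lambda>z. - a z) (\<lambda>z. - bcnj (b z)) Z1 Zj"
  shows "(\<forall>Z1 Zj Z1' Zj'. decaying_kernel a b Z1 Zj \<and> decaying_kernel a b Z1' Zj' \<longrightarrow>
            (\<forall>z0 z. z \<noteq> z0 \<longrightarrow> Z1 z0 z = Z1' z0 z \<and> Zj z0 z = Zj' z0 z))
       \<and> (\<forall>V1 Vj V1' Vj'. decaying_kernel (\<lambda>z. - a z) (\<lambda>z. - bcnj (b z)) V1 Vj \<and>
                         decaying_kernel (\<lambda>z. - a z) (\<lambda>z. - bcnj (b z)) V1' Vj' \<longrightarrow>
            (\<forall>z0 z. z \<noteq> z0 \<longrightarrow> V1 z0 z = V1' z0 z \<and> Vj z0 z = Vj' z0 z))"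
proof -
  obtain W1 Wj where W: "decaying_kernel (\<lambda>z. - a z) (\<lambda>z. - bcnj (b z)) W1 Wj" using assms(4) by blast
  obtain U1 Uj where U: "decaying_kernel a b U1 Uj" using assms(3) by blast
  have U': "decaying_kernel (\<lambda>z. - (- a z)) (\<lambda>z. - bcnj (- bcnj (b z))) U1 Uj"
    using U unfolding adj_adj_a adj_adj_b .
  show ?thesis
  proof (rule conjI; intro allI impI)
    fix Z1 Zj Z1' Zj' :: "complex \<Rightarrow> complex \<Rightarrow> bicomplex" and z0 z :: complex
    assume "decaying_kernel a b Z1 Zj \<and> decaying_kernel a b Z1' Zj'" "z \<noteq> z0"
    thus "Z1 z0 z = Z1' z0 z \<and> Zj z0 z = Zj' z0 z" using kernel_unique W by blast
  next
    fix V1 Vj V1' Vj' :: "complex \<Rightarrow> complex \<Rightarrow> bicomplex" and z0 z :: complex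
    assume "decaying_kernel (\<lambda>z. - a z) (\<lambda>z. - bcnj (b z)) V1 Vj \<and>
            decaying_kernel (\<lambda>z. - a z) (\<lambda>z. - bcnj (b z)) V1' Vj'" "z \<noteq> z0"
    thus "V1 z0 z = V1' z0 z \<and> Vj z0 z = Vj' z0 z"
      using kernel_unique[where a = "\<lambda>z. - a z" and b = "\<lambda>z. - bcnj (b z)", OF _ _ U'] by blast
  qed
qed

end
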